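(* Let $X \sim \mathcal{N}(\mu,\sigma^2)$ be a single observation, with $\mu\in\mathbb{R}$ and $\sigma>0$ unknown, and for $c>1$ let $I_1(c) = (X - c|X|,\; X + c|X|)$. Then the coverage probability $P_{\mu,\sigma}(\mu \in I_1(c))$ depends on $(\mu,\sigma)$ only through $\lambda=\mu/\sigma$ and is an even function of $\lambda$. Writing $\lambda = |\mu|/\sigma \ge 0$, it equals $$P_1(\lambda,c) = \Phi\Big(\frac{c}{c+1}\lambda\Big) + 1 - \Phi\Big(\frac{c}{c-1}\lambda\Big).$$ Over $\lambda\ge 0$, $P_1(\lambda,c)$ is minimized at $$\lambda^*(c) = \frac{c^2-1}{\sqrt{2}\,c^{3/2}}\sqrt{\log\frac{c+1}{c-1}}.$$ Consequently, for every $\alpha$ with $0<\alpha<1/2$ there exists a constant $c=c(\alpha)>1$ such that $\inf_{\mu\in\mathbb{R},\sigma>0} P_{\mu,\sigma}(\mu\in I_1(c(\alpha))) \ge 1-\alpha$.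
   Context: $\Phi$ denotes the standard normal cumulative distribution function. $I_1(c)$ is the (Abbott–Rosenblatt) interval centered at the single observation $X$ with half-length $c|X|$. *)

theory Defs
  imports "HOL-Probability.Probability"
begin

definition Phi :: "real \<Rightarrow> real" where
  "Phi t = measure (density lborel std_normal_density) {..t}"

definition normal_law :: "real \<Rightarrow> real \<Rightarrow> real measure" where
  "normal_law \<mu> \<sigma> = density lborel (normal_density \<mu> \<sigma>)"

definition coverage :: "real \<Rightarrow> real \<Rightarrow> real \<Rightarrow> real" where
  "coverage c \<mu> \<sigma> =
     measure (normal_law \<mu> \<sigma>) {x. x - c * \<bar>x\<bar> < \<mu> \<and> \<mu> < x + c * \<bar>x\<bar>}"

definition P1 :: "real \<Rightarrow> real \<Rightarrow> real" where
  "P1 l c = Phi (c / (c + 1) * l) + 1 - Phi (c / (c - 1) * l)"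

definition lambda_star :: "real \<Rightarrow> real" where
  "lambda_star c = (c\<^sup>2 - 1) / (sqrt 2 * c powr (3/2)) * sqrt (ln ((c + 1) / (c - 1)))"

end

theory Submission
  imports Defs
begin


abbreviation "SN \<equiv> density lborel std_normal_density"

lemma SN_prob: "prob_space SN" by (rule prob_space_normal_density) simp

lemma meas_SN: assumes [measurable]: "A \<in> sets borel"
  shows "measure SN A = (LINT x:A|lborel. std_normal_density x)"
proof -
  interpret prob_space SN by (rule SN_prob)
  have "measure SN A = integral\<^sup>L SN (indicator A)" by simp
  also have "\<dots> = integral\<^sup>L lborel (\<lambda>x. std_normal_density x *\<^sub>R indicator A x)"
    by (subst integral_density) auto
  also have "\<dots> = (LINT x:A|lborel. std_normal_density x)"
    by (simp add: set_lebesgue_integral_def mult.commute)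
  finally show ?thesis .
qed

lemma meas_SN_Icc: "measure SN {a..b} = integral {a..b} std_normal_density"
proof -
  have "set_integrable lborel {a..b} std_normal_density"
    unfolding set_integrable_def by (rule integrable_mult_indicator) auto
  thus ?thesis using meas_SN[of "{a..b}"] set_borel_integral_eq_integral by simp
qed

lemma SN_single: "measure SN {a} = 0"
proof -
  have ae: "AE x in lborel. x \<in> {a} \<longrightarrow> std_normal_density x = 0"
    using eventually_mono[OF AE_lborel_singleton[of a], of "\<lambda>x. x \<in> {a} \<longrightarrow> std_normal_density x = 0"]
    by auto
  have "{a} \<in> null_sets SN" using ae by (subst null_sets_density_iff) auto
  thus ?thesis by (simp add: measure_def null_sets_def)
qed

lemma SN_lessThan: "measure SN {..<t} = Phi t"
proof -
  interpret prob_space SN by (rule SN_prob)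
  have "{..t} = {..<t} \<union> {t}" by auto
  moreover have "measure SN ({..<t} \<union> {t}) = measure SN {..<t} + measure SN {t}"
    by (rule finite_measure_Union) auto
  ultimately have "Phi t = measure SN {..<t} + measure SN {t}"
    unfolding Phi_def by simp
  thus ?thesis using SN_single by simp
qed

lemma SN_greaterThan: "measure SN {t<..} = 1 - Phi t"
proof -
  interpret prob_space SN by (rule SN_prob)
  have "{t<..} = space SN - {..t}" by auto
  moreover have "measure SN (space SN - {..t}) = 1 - measure SN {..t}"
    by (rule prob_compl) auto
  ultimately show ?thesis unfolding Phi_def by simp
qed

lemma SN_atLeast: "measure SN {t..} = 1 - Phi t"
proof -
  interpret prob_space SN by (rule SN_prob)
  have "{t..} = {t<..} \<union> {t}" by auto
  moreover have "measure SN ({t<..} \<union> {t}) = measure SN {t<..} + measure SN {t}"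
    by (rule finite_measure_Union) auto
  ultimately have "measure SN {t..} = measure SN {t<..} + measure SN {t}" by simp
  thus ?thesis using SN_single SN_greaterThan by simp
qed

lemma Phi_split: "a \<le> u \<Longrightarrow> Phi u = measure SN {..<a} + integral {a..u} std_normal_density"
proof -
  interpret prob_space SN by (rule SN_prob)
  assume "a \<le> u"
  hence "{..u} = {..<a} \<union> {a..u}" by auto
  moreover have "measure SN ({..<a} \<union> {a..u}) = measure SN {..<a} + measure SN {a..u}"
    by (rule finite_measure_Union) auto
  ultimately have "Phi u = measure SN {..<a} + measure SN {a..u}"
    unfolding Phi_def by simp
  thus ?thesis by (simp add: meas_SN_Icc)
qed

lemma Phi_deriv: "(Phi has_real_derivative std_normal_density t) (at t)"
proof -
  let ?a = "t - 1" and ?b = "t + 1"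
  have cont: "continuous_on {?a..?b} std_normal_density"
    unfolding normal_density_def by (intro continuous_intros) auto
  have "((\<lambda>u. integral {?a..u} std_normal_density) has_real_derivative std_normal_density t) (at t within {?a..?b})"
    by (rule integral_has_real_derivative[OF cont]) auto
  hence "((\<lambda>u. integral {?a..u} std_normal_density) has_real_derivative std_normal_density t) (at t within {?a<..<?b})"
    by (rule DERIV_subset) auto
  hence i: "((\<lambda>u. integral {?a..u} std_normal_density) has_real_derivative std_normal_density t) (at t)"
    by (subst (asm) at_within_open) auto
  have d: "((\<lambda>u. measure SN {..<?a} + integral {?a..u} std_normal_density) has_real_derivative std_normal_density t) (at t)"
    using DERIV_add[OF DERIV_const[of "measure SN {..<?a}"] i] by simp
  show ?thesis
    by (rule has_field_derivative_transform_within_open[OF d, of "{?a<..<?b}"]) (auto intro: Phi_split[symmetric])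
qed

lemma SN_uminus: "distr SN lborel uminus = SN"
proof -
  interpret prob_space SN by (rule SN_prob)
  have "distributed SN lborel (\<lambda>x. x) std_normal_density"
    unfolding distributed_def by (auto simp: distr_id2)
  from normal_density_affine[OF this, where \<alpha>="-1" and \<beta>=0]
  have "distributed SN lborel (\<lambda>x. - x) std_normal_density" by simp
  thus ?thesis unfolding distributed_def by (simp add: fun_eq_iff)
qed

lemma Phi_neg: "Phi (- s) = 1 - Phi s"
proof -
  interpret prob_space SN by (rule SN_prob)
  have "Phi (-s) = measure (distr SN lborel uminus) {..-s}"
    unfolding Phi_def SN_uminus ..
  also have "\<dots> = measure SN (uminus -` {..-s} \<inter> space SN)"
    by (rule measure_distr) auto
  also have "uminus -` {..-s} \<inter> space SN = {s..}" by auto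
  finally show ?thesis using SN_atLeast by simp
qed

lemma N_pre: assumes "\<sigma> > 0" "B \<in> sets borel"
  shows "measure (normal_law \<mu> \<sigma>) ((\<lambda>x. (x - \<mu>) / \<sigma>) -` B) = measure SN B"
proof -
  let ?N = "normal_law \<mu> \<sigma>"
  interpret prob_space ?N unfolding normal_law_def by (rule prob_space_normal_density) (rule assms(1))
  have "distributed ?N lborel (\<lambda>x. x) (normal_density \<mu> \<sigma>)"
    unfolding distributed_def normal_law_def by (auto simp: distr_id2)
  hence "distributed ?N lborel (\<lambda>x. (x - \<mu>) / \<sigma>) std_normal_density"
    using normal_standard_normal_convert[OF assms(1)] by simp
  hence e: "distr ?N lborel (\<lambda>x. (x - \<mu>) / \<sigma>) = SN" unfolding distributed_def by simp
  have "measure SN B = measure (distr ?N lborel (\<lambda>x. (x - \<mu>) / \<sigma>)) B" by (simp add: e)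
  also have "\<dots> = measure ?N ((\<lambda>x. (x - \<mu>) / \<sigma>) -` B \<inter> space ?N)"
    by (rule measure_distr) (use assms in \<open>auto simp: normal_law_def\<close>)
  finally show ?thesis by (simp add: normal_law_def)
qed

lemma N_lessThan: assumes "\<sigma> > 0"
  shows "measure (normal_law \<mu> \<sigma>) {..<t} = Phi ((t - \<mu>) / \<sigma>)"
proof -
  have "(\<lambda>x. (x - \<mu>) / \<sigma>) -` {..<(t - \<mu>) / \<sigma>} = {..<t}"
    using assms by (auto simp: field_simps)
  thus ?thesis using N_pre[OF assms, of "{..<(t - \<mu>) / \<sigma>}" \<mu>] SN_lessThan by simp
qed

lemma N_greaterThan: assumes "\<sigma> > 0"
  shows "measure (normal_law \<mu> \<sigma>) {t<..} = 1 - Phi ((t - \<mu>) / \<sigma>)"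
proof -
  have "(\<lambda>x. (x - \<mu>) / \<sigma>) -` {(t - \<mu>) / \<sigma><..} = {t<..}"
    using assms by (auto simp: field_simps)
  thus ?thesis using N_pre[OF assms, of "{(t - \<mu>) / \<sigma><..}" \<mu>] SN_greaterThan by simp
qed

lemma N_single: assumes "\<sigma> > 0"
  shows "measure (normal_law \<mu> \<sigma>) {t} = 0"
proof -
  have "(\<lambda>x. (x - \<mu>) / \<sigma>) -` {(t - \<mu>) / \<sigma>} = {t}"
    using assms by auto
  thus ?thesis using N_pre[OF assms, of "{(t - \<mu>) / \<sigma>}" \<mu>] SN_single by simp
qed

lemma set_pos: fixes c \<mu> :: real assumes "c > 1" "\<mu> > 0"
  shows "{x. x - c * \<bar>x\<bar> < \<mu> \<and> \<mu> < x + c * \<bar>x\<bar>} = {..< -\<mu>/(c-1)} \<union> {\<mu>/(c+1)<..}"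
proof (intro set_eqI iffI)
  fix x assume "x \<in> {x. x - c * \<bar>x\<bar> < \<mu> \<and> \<mu> < x + c * \<bar>x\<bar>}"
  hence h: "x - c * \<bar>x\<bar> < \<mu>" "\<mu> < x + c * \<bar>x\<bar>" by auto
  show "x \<in> {..< -\<mu>/(c-1)} \<union> {\<mu>/(c+1)<..}"
  proof (cases "x \<ge> 0")
    case True
    hence ax: "\<bar>x\<bar> = x" by simp
    have "\<mu> < x * (c+1)" using h(2) unfolding ax by (simp add: algebra_simps)
    hence "\<mu>/(c+1) < x" using assms by (simp add: pos_divide_less_eq)
    thus ?thesis by simp
  next
    case False
    hence ax: "\<bar>x\<bar> = -x" by simp
    have "\<mu> < - x * (c-1)" using h(2) unfolding ax by (simp add: algebra_simps)
    hence "x * (c-1) < -\<mu>" by linarith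
    hence "x < (-\<mu>)/(c-1)" using assms by (subst pos_less_divide_eq) auto
    thus ?thesis by simp
  qed
next
  fix x assume "x \<in> {..< -\<mu>/(c-1)} \<union> {\<mu>/(c+1)<..}"
  hence o: "x < -\<mu>/(c-1) \<or> \<mu>/(c+1) < x" by auto
  show "x \<in> {x. x - c * \<bar>x\<bar> < \<mu> \<and> \<mu> < x + c * \<bar>x\<bar>}"
  proof (cases "x < -\<mu>/(c-1)")
    case True
    hence "x < (-\<mu>)/(c-1)" by simp
    hence 1: "x * (c-1) < -\<mu>" using assms by (subst (asm) pos_less_divide_eq) auto
    hence "x < 0" using assms by (smt (verit) mult_nonneg_nonneg)
    hence ax: "\<bar>x\<bar> = -x" by simp
    have "c * x < 0" using \<open>x < 0\<close> assms by (simp add: mult_pos_neg)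
    moreover have "\<mu> < x - c * x" using 1 by (simp add: algebra_simps)
    ultimately show ?thesis unfolding ax using \<open>x < 0\<close> assms by simp
  next
    case False
    hence "\<mu>/(c+1) < x" using o by simp
    hence 1: "\<mu> < x * (c+1)" using assms by (simp add: pos_divide_less_eq)
    hence "x > 0" using assms by (smt (verit) mult_nonpos_nonneg)
    hence ax: "\<bar>x\<bar> = x" by simp
    have "x * 1 < x * c" using assms(1) \<open>x > 0\<close> by (rule mult_strict_left_mono)
    hence "x < c * x" by (simp add: mult.commute)
    hence a1: "x - c * x < \<mu>" using assms by linarith
    have a2: "\<mu> < x + c * x" using 1 by (simp add: algebra_simps)
    show ?thesis using a1 a2 ax by simp
  qed
qed

lemma set_neg: fixes c \<mu> :: real assumes "c > 1" "\<mu> < 0"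
  shows "{x. x - c * \<bar>x\<bar> < \<mu> \<and> \<mu> < x + c * \<bar>x\<bar>} = {..< \<mu>/(c+1)} \<union> {-\<mu>/(c-1)<..}"
proof (rule set_eqI)
  fix x
  have "x \<in> {x. x - c * \<bar>x\<bar> < \<mu> \<and> \<mu> < x + c * \<bar>x\<bar>} \<longleftrightarrow>
        -x \<in> {x. x - c * \<bar>x\<bar> < -\<mu> \<and> -\<mu> < x + c * \<bar>x\<bar>}" by auto
  also have "\<dots> \<longleftrightarrow> -x \<in> {..< -(-\<mu>)/(c-1)} \<union> {-\<mu>/(c+1)<..}"
    using set_pos[OF assms(1), of "-\<mu>"] assms by simp
  also have "\<dots> \<longleftrightarrow> x \<in> {..< \<mu>/(c+1)} \<union> {-\<mu>/(c-1)<..}"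
    by auto
  finally show "x \<in> {x. x - c * \<bar>x\<bar> < \<mu> \<and> \<mu> < x + c * \<bar>x\<bar>} \<longleftrightarrow> x \<in> {..< \<mu>/(c+1)} \<union> {-\<mu>/(c-1)<..}" .
qed

lemma coverage_eq: fixes c \<mu> \<sigma> :: real assumes c: "c > 1" and s: "\<sigma> > 0"
  shows "coverage c \<mu> \<sigma> = P1 (\<bar>\<mu>\<bar> / \<sigma>) c"
proof -
  let ?N = "normal_law \<mu> \<sigma>"
  interpret prob_space ?N unfolding normal_law_def by (rule prob_space_normal_density) (rule s)
  have sets[simp]: "sets ?N = sets borel" by (simp add: normal_law_def)
  consider "\<mu> > 0" | "\<mu> < 0" | "\<mu> = 0" by linarith
  thus ?thesis
  proof cases
    case 1
    have "0 < \<mu>/(c+1)" "0 < \<mu>/(c-1)" using 1 c by simp_all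
    hence pq: "-\<mu>/(c-1) < \<mu>/(c+1)" by simp
    have "coverage c \<mu> \<sigma> = measure ?N ({..< -\<mu>/(c-1)} \<union> {\<mu>/(c+1)<..})"
      unfolding coverage_def using set_pos[OF c 1] by simp
    also have "\<dots> = measure ?N {..< -\<mu>/(c-1)} + measure ?N {\<mu>/(c+1)<..}"
      by (rule finite_measure_Union) (use pq in auto)
    also have "\<dots> = Phi ((-\<mu>/(c-1) - \<mu>)/\<sigma>) + (1 - Phi ((\<mu>/(c+1) - \<mu>)/\<sigma>))"
      using N_lessThan[OF s] N_greaterThan[OF s] by simp
    also have "(-\<mu>/(c-1) - \<mu>)/\<sigma> = - (c/(c-1) * (\<bar>\<mu>\<bar>/\<sigma>))"
      using 1 c s by (simp add: field_simps)
    also have "(\<mu>/(c+1) - \<mu>)/\<sigma> = - (c/(c+1) * (\<bar>\<mu>\<bar>/\<sigma>))"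
      using 1 c s by (simp add: field_simps)
    finally show ?thesis unfolding P1_def Phi_neg by simp
  next
    case 2
    have "0 < -\<mu>/(c+1)" "0 < -\<mu>/(c-1)" using 2 c by (simp_all add: divide_neg_pos)
    hence pq: "\<mu>/(c+1) < -\<mu>/(c-1)" by simp
    have "coverage c \<mu> \<sigma> = measure ?N ({..< \<mu>/(c+1)} \<union> {-\<mu>/(c-1)<..})"
      unfolding coverage_def using set_neg[OF c 2] by simp
    also have "\<dots> = measure ?N {..< \<mu>/(c+1)} + measure ?N {-\<mu>/(c-1)<..}"
      by (rule finite_measure_Union) (use pq in auto)
    also have "\<dots> = Phi ((\<mu>/(c+1) - \<mu>)/\<sigma>) + (1 - Phi ((-\<mu>/(c-1) - \<mu>)/\<sigma>))"
      using N_lessThan[OF s] N_greaterThan[OF s] by simp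
    also have "(-\<mu>/(c-1) - \<mu>)/\<sigma> = c/(c-1) * (\<bar>\<mu>\<bar>/\<sigma>)"
      using 2 c s by (simp add: field_simps)
    also have "(\<mu>/(c+1) - \<mu>)/\<sigma> = c/(c+1) * (\<bar>\<mu>\<bar>/\<sigma>)"
      using 2 c s by (simp add: field_simps)
    finally show ?thesis unfolding P1_def by simp
  next
    case 3
    have "{x. x - c * \<bar>x\<bar> < \<mu> \<and> \<mu> < x + c * \<bar>x\<bar>} = space ?N - {0}"
    proof (intro set_eqI iffI)
      fix x assume "x \<in> {x. x - c * \<bar>x\<bar> < \<mu> \<and> \<mu> < x + c * \<bar>x\<bar>}"
      thus "x \<in> space ?N - {0}" using 3 by (auto simp: normal_law_def)
    next
      fix x assume "x \<in> space ?N - {0}"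
      hence "x \<noteq> 0" by auto
      have "x < c * \<bar>x\<bar>" "-x < c * \<bar>x\<bar>"
        using c \<open>x \<noteq> 0\<close> by (smt (verit) mult_less_cancel_right1 abs_ge_self abs_not_less_zero)+
      thus "x \<in> {x. x - c * \<bar>x\<bar> < \<mu> \<and> \<mu> < x + c * \<bar>x\<bar>}" using 3 by auto
    qed
    hence "coverage c \<mu> \<sigma> = measure ?N (space ?N - {0})" unfolding coverage_def by simp
    also have "\<dots> = 1 - measure ?N {0}" by (rule prob_compl) auto
    also have "\<dots> = 1" using N_single[OF s] by simp
    finally show ?thesis unfolding P1_def using 3 by simp
  qed
qed


lemma ls_sq: fixes c :: real assumes c: "c > 1"
  shows "lambda_star c \<ge> 0" "(lambda_star c)\<^sup>2 = (c\<^sup>2 - 1)\<^sup>2 / (2 * c^3) * ln ((c + 1) / (c - 1))"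
proof -
  have L: "ln ((c + 1) / (c - 1)) \<ge> 0" using c by simp
  have p: "(c powr (3/2))\<^sup>2 = c^3"
  proof -
    have "(c powr (3/2))\<^sup>2 = c powr (3/2) * c powr (3/2)" by (simp add: power2_eq_square)
    also have "\<dots> = c powr (real 3)" using c by (simp add: powr_add[symmetric])
    also have "\<dots> = c^3" using c by (simp add: powr_realpow)
    finally show ?thesis .
  qed
  show "lambda_star c \<ge> 0" unfolding lambda_star_def using c L by simp
  show "(lambda_star c)\<^sup>2 = (c\<^sup>2 - 1)\<^sup>2 / (2 * c^3) * ln ((c + 1) / (c - 1))"
    unfolding lambda_star_def using L by (simp add: power_mult_distrib power_divide p)
qed

lemma t1: fixes a l :: real assumes a: "a > 0" shows "exp (ln a - (a*l)\<^sup>2/2) = a * exp (- (a*l)\<^sup>2/2)"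
proof -
  have "exp (ln a - (a*l)\<^sup>2/2) = exp (ln a) * exp (- (a*l)\<^sup>2/2)"
    by (simp only: diff_conv_add_uminus exp_add minus_divide_left)
  thus ?thesis using a by simp
qed
lemma t2: fixes a l :: real assumes a: "a > 0" shows "a * std_normal_density (a*l) = exp (ln a - (a*l)\<^sup>2/2) / sqrt (2*pi)"
  unfolding t1[OF a] std_normal_density_def by simp
lemma t3: fixes x y :: real shows "x / sqrt (2*pi) \<le> y / sqrt (2*pi) \<longleftrightarrow> x \<le> y"
proof -
  have "sqrt (2*pi) > 0" by simp
  thus ?thesis by (simp add: divide_le_cancel)
qed
lemma t4: fixes a b l :: real shows "ln a - (a*l)\<^sup>2/2 \<le> ln b - (b*l)\<^sup>2/2 \<longleftrightarrow> (b\<^sup>2 - a\<^sup>2)/2 * l\<^sup>2 \<le> ln b - ln a"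
proof -
  have A: "(a*l)\<^sup>2 = a\<^sup>2*l\<^sup>2" "(b*l)\<^sup>2 = b\<^sup>2*l\<^sup>2" by (simp_all only: power_mult_distrib)
  have B: "(b\<^sup>2 - a\<^sup>2)/2 * l\<^sup>2 = b\<^sup>2*l\<^sup>2/2 - a\<^sup>2*l\<^sup>2/2" by (simp add: field_simps)
  show ?thesis unfolding A B by linarith
qed
lemma flip_iff: fixes p q u v w :: real
  shows "((p - q)/2 * w \<le> u - v) \<longleftrightarrow> (v - u \<le> (q - p)/2 * w)"
proof -
  have "(q - p)/2 * w = - ((p - q)/2 * w)" by (simp add: field_simps)
  thus ?thesis by linarith
qed
lemma core_iff: fixes a b l :: real assumes a: "a > 0" and b: "b > 0"
  shows "a * std_normal_density (a*l) \<le> b * std_normal_density (b*l) \<longleftrightarrow>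
         (b\<^sup>2 - a\<^sup>2)/2 * l\<^sup>2 \<le> ln b - ln a"
proof -
  have "a * std_normal_density (a*l) \<le> b * std_normal_density (b*l) \<longleftrightarrow>
        exp (ln a - (a*l)\<^sup>2/2) \<le> exp (ln b - (b*l)\<^sup>2/2)"
    unfolding t2[OF a] t2[OF b] by (rule t3)
  also have "\<dots> \<longleftrightarrow> ln a - (a*l)\<^sup>2/2 \<le> ln b - (b*l)\<^sup>2/2" by (rule exp_le_cancel_iff)
  also have "\<dots> \<longleftrightarrow> (b\<^sup>2 - a\<^sup>2)/2 * l\<^sup>2 \<le> ln b - ln a" by (rule t4)
  finally show ?thesis .
qed

lemma K_id: fixes c :: real assumes c: "c > 1"
  shows "((c/(c-1))\<^sup>2 - (c/(c+1))\<^sup>2)/2 = 2*c^3/(c\<^sup>2-1)\<^sup>2"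
    "ln (c/(c-1)) - ln (c/(c+1)) = ln ((c + 1) / (c - 1))"
proof -
  define a where "a = c/(c+1)"
  define b where "b = c/(c-1)"
  define d where "d = c\<^sup>2 - 1"
  have d: "d = (c-1)*(c+1)" unfolding d_def by (simp add: algebra_simps power2_eq_square)
  have dp: "d > 0" using c unfolding d by simp
  have a': "a = c*(c-1)/d" unfolding a_def d using c by simp
  have b': "b = c*(c+1)/d" unfolding b_def d using c by simp
  have "b\<^sup>2 - a\<^sup>2 = ((c*(c+1))\<^sup>2 - (c*(c-1))\<^sup>2)/d\<^sup>2"
    unfolding a' b' by (simp add: power_divide diff_divide_distrib)
  also have "(c*(c+1))\<^sup>2 - (c*(c-1))\<^sup>2 = 4*c^3"
    by (simp add: power2_eq_square power3_eq_cube algebra_simps)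
  finally show "((c/(c-1))\<^sup>2 - (c/(c+1))\<^sup>2)/2 = 2*c^3/(c\<^sup>2-1)\<^sup>2"
    unfolding d_def a_def b_def by simp
  show "ln (c/(c-1)) - ln (c/(c+1)) = ln ((c + 1) / (c - 1))"
    using c by (simp add: ln_div)
qed

lemma D_le_iff: fixes c l :: real assumes c: "c > 1"
  shows "c/(c+1) * std_normal_density (c/(c+1)*l) \<le> c/(c-1) * std_normal_density (c/(c-1)*l)
     \<longleftrightarrow> 2*c^3/(c\<^sup>2-1)\<^sup>2 * l\<^sup>2 \<le> ln ((c + 1) / (c - 1))"
proof -
  have "c/(c+1) * std_normal_density (c/(c+1)*l) \<le> c/(c-1) * std_normal_density (c/(c-1)*l)
     \<longleftrightarrow> ((c/(c-1))\<^sup>2 - (c/(c+1))\<^sup>2)/2 * l\<^sup>2 \<le> ln (c/(c-1)) - ln (c/(c+1))"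
    using c by (intro core_iff) auto
  thus ?thesis unfolding K_id[OF c] .
qed

lemma D_ge_iff: fixes c l :: real assumes c: "c > 1"
  shows "c/(c+1) * std_normal_density (c/(c+1)*l) \<ge> c/(c-1) * std_normal_density (c/(c-1)*l)
     \<longleftrightarrow> 2*c^3/(c\<^sup>2-1)\<^sup>2 * l\<^sup>2 \<ge> ln ((c + 1) / (c - 1))"
proof -
  have "c/(c-1) * std_normal_density (c/(c-1)*l) \<le> c/(c+1) * std_normal_density (c/(c+1)*l)
     \<longleftrightarrow> ((c/(c+1))\<^sup>2 - (c/(c-1))\<^sup>2)/2 * l\<^sup>2 \<le> ln (c/(c+1)) - ln (c/(c-1))"
    using c by (intro core_iff) auto
  also have "\<dots> \<longleftrightarrow> ln (c/(c-1)) - ln (c/(c+1)) \<le> ((c/(c-1))\<^sup>2 - (c/(c+1))\<^sup>2)/2 * l\<^sup>2"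
    by (rule flip_iff)
  finally show ?thesis unfolding K_id[OF c] .
qed

lemma P1_deriv: "((\<lambda>l. P1 l c) has_real_derivative
   (c/(c+1) * std_normal_density (c/(c+1)*l) - c/(c-1) * std_normal_density (c/(c-1)*l))) (at l)"
proof -
  have da: "((\<lambda>l. Phi (c/(c+1)*l)) has_real_derivative std_normal_density (c/(c+1)*l) * (c/(c+1))) (at l)"
    by (rule DERIV_chain2[OF Phi_deriv DERIV_cmult_Id])
  have db: "((\<lambda>l. Phi (c/(c-1)*l)) has_real_derivative std_normal_density (c/(c-1)*l) * (c/(c-1))) (at l)"
    by (rule DERIV_chain2[OF Phi_deriv DERIV_cmult_Id])
  have "((\<lambda>l. Phi (c/(c+1)*l) + 1 - Phi (c/(c-1)*l)) has_real_derivative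
     (std_normal_density (c/(c+1)*l) * (c/(c+1)) + 0 - std_normal_density (c/(c-1)*l) * (c/(c-1)))) (at l)"
    by (intro DERIV_diff DERIV_add da db DERIV_const)
  thus ?thesis unfolding P1_def by (simp add: mult.commute)
qed

lemma P1_min: fixes c l :: real assumes c: "c > 1" and l: "l \<ge> 0"
  shows "P1 (lambda_star c) c \<le> P1 l c"
proof -
  let ?ls = "lambda_star c"
  let ?K = "2*c^3/(c\<^sup>2-1)\<^sup>2"
  let ?L = "ln ((c + 1) / (c - 1))"
  have ls0: "?ls \<ge> 0" using ls_sq[OF c] by simp
  have c3: "c^3 > 0" using c by simp
  have "c\<^sup>2 > 1" using c by (simp add: one_less_power)
  hence c2: "c\<^sup>2 - 1 > 0" by simp
  have K: "?K > 0" using c3 c2 by simp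
  have KL: "?K * ?ls\<^sup>2 = ?L" unfolding ls_sq(2)[OF c] using c3 c2 by (simp add: field_simps)
  show ?thesis
  proof (cases "l \<le> ?ls")
    case True
    show ?thesis
    proof (rule DERIV_nonpos_imp_nonincreasing[of l ?ls "\<lambda>l. P1 l c", OF True])
      fix x assume x: "l \<le> x" "x \<le> ?ls"
      have "x\<^sup>2 \<le> ?ls\<^sup>2" using x l by (intro power_mono) auto
      hence "?K * x\<^sup>2 \<le> ?K * ?ls\<^sup>2" using K by (intro mult_left_mono) auto
      hence "?K * x\<^sup>2 \<le> ?L" using KL by simp
      hence "c/(c+1) * std_normal_density (c/(c+1)*x) \<le> c/(c-1) * std_normal_density (c/(c-1)*x)"
        using D_le_iff[OF c] by simp
      hence "c/(c+1) * std_normal_density (c/(c+1)*x) - c/(c-1) * std_normal_density (c/(c-1)*x) \<le> 0"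
        by simp
      with P1_deriv[of c x] show "\<exists>y. ((\<lambda>l. P1 l c) has_real_derivative y) (at x) \<and> y \<le> 0"
        by blast
    qed
  next
    case False
    show ?thesis
    proof (rule DERIV_nonneg_imp_nondecreasing[of ?ls l "\<lambda>l. P1 l c"])
      show "?ls \<le> l" using False by simp
      fix x assume x: "?ls \<le> x" "x \<le> l"
      have "?ls\<^sup>2 \<le> x\<^sup>2" using x ls0 by (intro power_mono) auto
      hence "?K * ?ls\<^sup>2 \<le> ?K * x\<^sup>2" using K by (intro mult_left_mono) auto
      hence "?L \<le> ?K * x\<^sup>2" using KL by simp
      hence "c/(c+1) * std_normal_density (c/(c+1)*x) \<ge> c/(c-1) * std_normal_density (c/(c-1)*x)"
        using D_ge_iff[OF c] by simp
      hence "c/(c+1) * std_normal_density (c/(c+1)*x) - c/(c-1) * std_normal_density (c/(c-1)*x) \<ge> 0"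
        by simp
      with P1_deriv[of c x] show "\<exists>y. ((\<lambda>l. P1 l c) has_real_derivative y) (at x) \<and> y \<ge> 0"
        by blast
    qed
  qed
qed

lemma gap: fixes c :: real assumes c: "c > 1"
  shows "((c/(c-1) - c/(c+1)) * lambda_star c)\<^sup>2 = 2 * ln ((c + 1) / (c - 1)) / c"
proof -
  define d where "d = c\<^sup>2 - 1"
  have d: "d = (c-1)*(c+1)" unfolding d_def by (simp add: algebra_simps power2_eq_square)
  have dp: "d > 0" using c unfolding d by simp
  have e1: "c/(c-1) - c/(c+1) = 2*c/d" unfolding d using c by (simp add: field_simps)
  have "((c/(c-1) - c/(c+1)) * lambda_star c)\<^sup>2 = (c/(c-1) - c/(c+1))\<^sup>2 * (lambda_star c)\<^sup>2"
    by (simp only: power_mult_distrib)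
  also have "\<dots> = (2*c/d)\<^sup>2 * (d\<^sup>2 / (2 * c^3) * ln ((c + 1) / (c - 1)))"
    unfolding e1 ls_sq(2)[OF c] d_def ..
  also have "\<dots> = 2 * ln ((c + 1) / (c - 1)) / c"
    using dp c by (simp add: field_simps power2_eq_square power3_eq_cube)
  finally show ?thesis .
qed

lemma Phi_lip: fixes x y :: real assumes "x \<le> y" shows "Phi y - Phi x \<le> (y - x) / 2"
proof (cases "x = y")
  case False
  hence xy: "x < y" using assms by simp
  obtain z where "x < z" "z < y" "Phi y - Phi x = (y - x) * std_normal_density z"
    using MVT2[OF xy, of Phi std_normal_density] Phi_deriv by blast
  moreover have "std_normal_density z \<le> 1/2"
  proof -
    have e: "exp (- z\<^sup>2 / 2) \<le> 1" by simp
    have s: "sqrt (2*pi) \<ge> 2"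
      using pi_gt3 by (simp add: real_le_rsqrt)
    have "1 / sqrt (2*pi) * exp (- z\<^sup>2 / 2) \<le> 1 / sqrt (2*pi) * 1"
      using e by (intro mult_left_mono) auto
    also have "\<dots> \<le> 1/2" using s by (simp add: divide_le_eq)
    finally show ?thesis unfolding std_normal_density_def .
  qed
  ultimately show ?thesis using xy
    using mult_left_mono[of "std_normal_density z" "1/2" "y - x"] by simp
qed simp

lemma arith_help: fixes P D G a :: real
  shows "P = 1 - D \<Longrightarrow> D \<le> G / 2 \<Longrightarrow> G \<le> 2 * a \<Longrightarrow> 1 - a \<le> P" by linarith

lemma final_bound: fixes \<alpha> :: real assumes a: "0 < \<alpha>" "\<alpha> < 1/2" and l: "l \<ge> 0"
  shows "P1 l (1 + 1/\<alpha>) \<ge> 1 - \<alpha>"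
proof -
  define c where "c = 1 + 1/\<alpha>"
  have c: "c > 1" unfolding c_def using a by simp
  let ?ls = "lambda_star c"
  let ?L = "ln ((c + 1) / (c - 1))"
  have ls0: "?ls \<ge> 0" using ls_sq[OF c] by simp
  have ab: "c/(c+1) \<le> c/(c-1)" using c by (intro divide_left_mono) auto
  have ab': "c/(c+1) * ?ls \<le> c/(c-1) * ?ls" using ab ls0 by (rule mult_right_mono)
  have "P1 ?ls c = 1 - (Phi (c/(c-1) * ?ls) - Phi (c/(c+1) * ?ls))" unfolding P1_def by simp
  moreover have "Phi (c/(c-1) * ?ls) - Phi (c/(c+1) * ?ls) \<le> ((c/(c-1) - c/(c+1)) * ?ls) / 2"
    using Phi_lip[OF ab'] by (simp add: left_diff_distrib)
  moreover have "(c/(c-1) - c/(c+1)) * ?ls \<le> 2 * \<alpha>"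
  proof -
    have "?L \<le> (c + 1) / (c - 1) - 1" using c by (intro ln_le_minus_one) simp
    also have "\<dots> = 2 * \<alpha>" unfolding c_def using a by (simp add: field_simps)
    finally have L: "?L \<le> 2 * \<alpha>" .
    have "2 * ?L / c \<le> 4 * \<alpha> / c" using L c by (simp add: divide_right_mono)
    also have "\<dots> \<le> 4 * \<alpha> * \<alpha>"
    proof -
      have "1 / c \<le> \<alpha>" unfolding c_def using a by (simp add: field_simps)
      hence "4 * \<alpha> * (1 / c) \<le> 4 * \<alpha> * \<alpha>" using a by (intro mult_left_mono) auto
      thus ?thesis by simp
    qed
    finally have "((c/(c-1) - c/(c+1)) * ?ls)\<^sup>2 \<le> (2 * \<alpha>)\<^sup>2"
      unfolding gap[OF c] by (simp add: power2_eq_square)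
    thus ?thesis by (rule power2_le_imp_le) (use a in auto)
  qed
  ultimately have "P1 ?ls c \<ge> 1 - \<alpha>" by (rule arith_help)
  hence "P1 l c \<ge> 1 - \<alpha>" using P1_min[OF c l] by (rule order_trans)
  thus ?thesis by (simp only: c_def)
qed


theorem corollary1:
  fixes c :: real
  assumes "c > 1"
  shows "(\<forall>\<mu> \<sigma> \<mu>' \<sigma>'. \<sigma> > 0 \<longrightarrow> \<sigma>' > 0 \<longrightarrow> \<mu> / \<sigma> = \<mu>' / \<sigma>' \<longrightarrow>
            coverage c \<mu> \<sigma> = coverage c \<mu>' \<sigma>')
       \<and> (\<forall>\<mu> \<sigma>. \<sigma> > 0 \<longrightarrow> coverage c (- \<mu>) \<sigma> = coverage c \<mu> \<sigma>)
       \<and> (\<forall>\<mu> \<sigma>. \<sigma> > 0 \<longrightarrow> coverage c \<mu> \<sigma> = P1 (\<bar>\<mu>\<bar> / \<sigma>) c)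
       \<and> lambda_star c \<ge> 0
       \<and> (\<forall>l\<ge>0. P1 (lambda_star c) c \<le> P1 l c)
       \<and> (\<forall>\<alpha>. 0 < \<alpha> \<and> \<alpha> < 1/2 \<longrightarrow>
            (\<exists>c'>1. \<forall>\<mu> \<sigma>. \<sigma> > 0 \<longrightarrow> coverage c' \<mu> \<sigma> \<ge> 1 - \<alpha>))"
proof (intro conjI allI impI)
  fix \<mu> \<sigma> \<mu>' \<sigma>' :: real
  assume s: "\<sigma> > 0" and s': "\<sigma>' > 0" and e: "\<mu> / \<sigma> = \<mu>' / \<sigma>'"
  have a1: "\<bar>\<mu>\<bar> / \<sigma> = \<bar>\<mu> / \<sigma>\<bar>" using s by (simp add: abs_divide)
  have a2: "\<bar>\<mu>'\<bar> / \<sigma>' = \<bar>\<mu>' / \<sigma>'\<bar>" using s' by (simp add: abs_divide)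
  have "\<bar>\<mu>\<bar> / \<sigma> = \<bar>\<mu>'\<bar> / \<sigma>'" unfolding a1 a2 e ..
  thus "coverage c \<mu> \<sigma> = coverage c \<mu>' \<sigma>'"
    unfolding coverage_eq[OF assms s] coverage_eq[OF assms s'] by simp
next
  fix \<mu> \<sigma> :: real assume s: "\<sigma> > 0"
  show "coverage c (- \<mu>) \<sigma> = coverage c \<mu> \<sigma>"
    using coverage_eq[OF assms s, of "-\<mu>"] coverage_eq[OF assms s, of \<mu>] by simp
next
  fix \<mu> \<sigma> :: real assume s: "\<sigma> > 0"
  show "coverage c \<mu> \<sigma> = P1 (\<bar>\<mu>\<bar> / \<sigma>) c" by (rule coverage_eq[OF assms s])
next
  show "lambda_star c \<ge> 0" by (rule ls_sq(1)[OF assms])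
next
  fix l :: real assume "l \<ge> 0"
  thus "P1 (lambda_star c) c \<le> P1 l c" by (rule P1_min[OF assms])
next
  fix \<alpha> :: real assume a: "0 < \<alpha> \<and> \<alpha> < 1/2"
  show "\<exists>c'>1. \<forall>\<mu> \<sigma>. \<sigma> > 0 \<longrightarrow> coverage c' \<mu> \<sigma> \<ge> 1 - \<alpha>"
  proof (intro exI[of _ "1 + 1/\<alpha>"] conjI allI impI)
    show "1 < 1 + 1/\<alpha>" using a by simp
    fix \<mu> \<sigma> :: real assume s: "\<sigma> > 0"
    have "coverage (1 + 1/\<alpha>) \<mu> \<sigma> = P1 (\<bar>\<mu>\<bar> / \<sigma>) (1 + 1/\<alpha>)"
      by (rule coverage_eq) (use a s in auto)
    moreover have "P1 (\<bar>\<mu>\<bar> / \<sigma>) (1 + 1/\<alpha>) \<ge> 1 - \<alpha>"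
      by (rule final_bound) (use a s in auto)
    ultimately show "coverage (1 + 1/\<alpha>) \<mu> \<sigma> \<ge> 1 - \<alpha>" by simp
  qed
qed

end
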